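(* Let $n\ge1$ be an integer with binary expansion $n=\sum_{k=0}^{K}2^{L_k}$, $L_0>L_1>\dots>L_K\ge0$. Define the probability distribution on $\{L_0,\dots,L_K\}$ by $\Pr(L=L_k)=2^{L_k}/n$. Then its Shannon entropy satisfies $H(L)\le 2$ bits.
   Context: Entropy is measured in bits ($\log_2$). *)

theory Defs
  imports Main Complex_Main
begin

definition binary_positions :: "nat \<Rightarrow> nat set" where
  "binary_positions n = {k. bit n k}"

definition shannon_entropy :: "'a set \<Rightarrow> ('a \<Rightarrow> real) \<Rightarrow> real" where
  "shannon_entropy S p = - (\<Sum>x\<in>S. p x * log 2 (p x))"

definition bit_dist :: "nat \<Rightarrow> nat \<Rightarrow> real" where
  "bit_dist n k = 2 ^ k / real n"

end

theory Submission
  imports Defs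
begin

definition TT :: "nat \<Rightarrow> nat" where
  "TT n = (\<Sum>k\<in>binary_positions n. 2^k * k)"

lemma bp_decomp:
  "binary_positions n = (if odd n then {0} else {}) \<union> Suc ` binary_positions (n div 2)"
  unfolding binary_positions_def
  apply (rule set_eqI)
  subgoal for k by (cases k) (auto simp: bit_Suc bit_0)
  done

lemma bp0: "binary_positions 0 = {}"
  unfolding binary_positions_def by simp

lemma bp_facts: "finite (binary_positions n) \<and> (\<Sum>k\<in>binary_positions n. (2::nat)^k) = n"
proof (induction n rule: less_induct)
  case (less n)
  show ?case
  proof (cases "n = 0")
    case True thus ?thesis by (simp add: bp0)
  next
    case False
    hence lt: "n div 2 < n" by simp
    from less[OF lt] have f: "finite (binary_positions (n div 2))"
      and s: "(\<Sum>k\<in>binary_positions (n div 2). (2::nat)^k) = n div 2" by auto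
    have d: "(if odd n then {0} else {}) \<inter> Suc ` binary_positions (n div 2) = {}" by auto
    have "(\<Sum>k\<in>binary_positions n. (2::nat)^k) =
      (\<Sum>k\<in>(if odd n then {0} else {}). (2::nat)^k) + (\<Sum>k\<in>Suc ` binary_positions (n div 2). 2^k)"
      by (subst bp_decomp, rule sum.union_disjoint) (use f d in auto)
    also have "(\<Sum>k\<in>Suc ` binary_positions (n div 2). (2::nat)^k) = 2 * (n div 2)"
      by (subst sum.reindex) (auto simp: s sum_distrib_left[symmetric])
    finally have "(\<Sum>k\<in>binary_positions n. (2::nat)^k) = n" by auto
    moreover have "finite (binary_positions n)" by (subst bp_decomp) (use f in auto)
    ultimately show ?thesis by simp
  qed
qed

lemma TT_rec: "TT n = 2 * TT (n div 2) + 2 * (n div 2)"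
proof -
  have f: "finite (binary_positions (n div 2))" using bp_facts by blast
  have s: "(\<Sum>k\<in>binary_positions (n div 2). (2::nat)^k) = n div 2" using bp_facts by blast
  have d: "(if odd n then {0} else {}) \<inter> Suc ` binary_positions (n div 2) = {}" by auto
  have "TT n = (\<Sum>k\<in>(if odd n then {0} else {}). 2^k * k) + (\<Sum>k\<in>Suc ` binary_positions (n div 2). 2^k*k)"
    unfolding TT_def by (subst bp_decomp, rule sum.union_disjoint) (use f d in auto)
  also have "(\<Sum>k\<in>Suc ` binary_positions (n div 2). (2::nat)^k*k)
     = (\<Sum>k\<in>binary_positions (n div 2). 2 * (2^k*k) + 2 * 2^k)"
    by (subst sum.reindex) (auto simp: algebra_simps)
  also have "\<dots> = 2 * TT (n div 2) + 2 * (n div 2)"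
    by (simp add: sum.distrib sum_distrib_left[symmetric] s TT_def)
  finally show ?thesis by simp
qed

lemma key: "n \<ge> 1 \<Longrightarrow> \<exists>m. n < 2^(m+1) \<and> n*(m+1) + m + 1 \<le> TT n + 2*n"
proof (induction n rule: less_induct)
  case (less n)
  show ?case
  proof (cases "n = 1")
    case True
    have "binary_positions 1 = {0}" unfolding binary_positions_def
      apply (rule set_eqI)
      subgoal for k by (cases k) (simp_all add: bit_0 bit_Suc)
      done
    hence "TT 1 = 0" by (simp add: TT_def)
    thus ?thesis using True by (intro exI[of _ 0]) simp
  next
    case False
    hence lt: "n div 2 < n" "n div 2 \<ge> 1" using less.prems by auto
    from less.IH[OF lt] obtain m where m: "n div 2 < 2^(m+1)"
      "(n div 2)*(m+1) + m + 1 \<le> TT (n div 2) + 2*(n div 2)" by blast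
    have T: "TT n = 2 * TT (n div 2) + 2 * (n div 2)" by (rule TT_rec)
    have nn: "n = 2*(n div 2) \<or> n = 2*(n div 2)+1" by auto
    show ?thesis
    proof (intro exI[of _ "m+1"] conjI)
      show "n < 2^(m+1+1)" using m(1) nn by auto
      show "n * (m + 1 + 1) + (m + 1) + 1 \<le> TT n + 2 * n"
      proof -
        define k where "k = n div 2"
        have h: "k*m + k + m + 1 \<le> TT k + 2*k" using m(2) unfolding k_def by (simp add: algebra_simps)
        have T': "TT n = 2 * TT k + 2 * k" using T k_def by simp
        from nn have "n = 2*k \<or> n = 2*k+1" unfolding k_def .
        thus ?thesis
        proof
          assume "n = 2*k"
          thus ?thesis using h T' by (simp add: algebra_simps)
        next
          assume "n = 2*k+1"
          thus ?thesis using h T' by (simp add: algebra_simps)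
        qed
      qed
    qed
  qed
qed

theorem mainTheorem3:
  fixes n :: nat
  assumes "n \<ge> 1"
  shows "shannon_entropy (binary_positions n) (bit_dist n) \<le> 2"
proof -
  let ?S = "binary_positions n"
  have f: "finite ?S" and s: "(\<Sum>k\<in>?S. (2::nat)^k) = n" using bp_facts by auto
  have sr: "(\<Sum>k\<in>?S. (2::real)^k) = real n"
    using arg_cong[OF s, of real] by simp
  have np: "real n > 0" using assms by simp
  have lg: "log 2 (bit_dist n k) = real k - log 2 (real n)" for k
    unfolding bit_dist_def using np by (simp add: log_divide log_nat_power)
  have "shannon_entropy ?S (bit_dist n) =
      - (\<Sum>k\<in>?S. (2^k / real n) * real k - (2^k / real n) * log 2 (real n))"
    unfolding shannon_entropy_def
    by (rule arg_cong[where f=uminus], rule sum.cong, simp, simp only: lg, simp add: bit_dist_def algebra_simps)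
  also have "\<dots> = log 2 (real n) * ((\<Sum>k\<in>?S. 2^k) / real n) - (\<Sum>k\<in>?S. 2^k * real k) / real n"
    by (simp add: sum_subtractf sum_divide_distrib[symmetric] sum_distrib_left sum_distrib_right algebra_simps)
  also have "\<dots> = log 2 (real n) - real (TT n) / real n"
    using np by (simp add: sr TT_def)
  finally have H: "shannon_entropy ?S (bit_dist n) = log 2 (real n) - real (TT n) / real n" .
  obtain m where m: "n < 2^(m+1)" "n*(m+1) + m + 1 \<le> TT n + 2*n" using key[OF assms] by blast
  have rl0: "real n < real (2^(m+1))"
    using m(1) by (simp only: of_nat_less_iff)
  hence rl: "real n < 2^(m+1)" by simp
  have "log 2 (real n) < log 2 (2^(m+1))"
    using np rl by (intro log_less) auto
  hence l: "log 2 (real n) < real m + 1" by (simp add: log_nat_power del: power_Suc)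
  have "real n * (real m + 1) \<le> real (TT n) + 2 * real n"
  proof -
    have "n*(m+1) \<le> TT n + 2*n" using m(2) by linarith
    hence "real (n*(m+1)) \<le> real (TT n + 2*n)" by (simp only: of_nat_le_iff)
    thus ?thesis by (simp add: algebra_simps)
  qed
  hence "real m + 1 \<le> real (TT n) / real n + 2" using np by (simp add: field_simps)
  thus ?thesis using H l by linarith
qed

end
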